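(* Let $\vec h=(h_0,\dots,h_{L_{\mathrm H}})$ be a channel impulse response with $L_{\mathrm H}+1$ taps (so the channel memory is $L_{\mathrm H}$, i.e. $|H(\omega)|^2=\sum_{\ell=-L_{\mathrm H}}^{L_{\mathrm H}} g_\ell e^{-j\ell\omega}$ with $g_\ell=\sum_k h_k h_{k-\ell}^*$ and $g_{L_{\mathrm H}}\neq 0$), and let $P(\omega)$ be the transmit filter obtained by the waterfilling algorithm, i.e. $$|P(\omega)|^2=\max\left(0,\ \theta-\frac{N_0}{|H(\omega)|^2}\right)$$ for the constant $\theta$ fixed by the power constraint $\int_{-\pi}^{\pi}|P(\omega)|^2\,\mathrm d\omega=2\pi$. Let $K$ denote the memory of the combined channel-precoder response $\vec v=\vec h\star\vec p$ (i.e. $\vec v$ has $K+1$ taps). Then $K\ge L_{\mathrm H}$.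
   Context: $H(\omega)=\sum_{\ell=0}^{L_{\mathrm H}} h_\ell e^{-j\ell\omega}$ is the DTFT of the channel, $N_0>0$ the noise variance, $P(\omega)$ the DTFT of the transmit filter $\vec p$, and $\star$ denotes convolution. The waterfilling filter with Gaussian inputs and an unconstrained-complexity (full-memory) receiver is the capacity-achieving transmit filter for the ISI channel $y_k=\sum_{\ell=0}^{L_{\mathrm H}}a_{k-\ell}h_\ell+w_k$ with $\vec a=\vec u\star\vec p$. *)

theory Defs
  imports "HOL-Analysis.Analysis"
begin

definition dtft :: "(int \<Rightarrow> complex) \<Rightarrow> real \<Rightarrow> complex" where
  "dtft x \<omega> = (\<Sum>\<^sub>\<infinity>n. x n * exp (- (\<i> * complex_of_real (real_of_int n * \<omega>))))"

definition conv :: "(int \<Rightarrow> complex) \<Rightarrow> (int \<Rightarrow> complex) \<Rightarrow> int \<Rightarrow> complex" where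
  "conv h p k = (\<Sum>\<^sub>\<infinity>l. h l * p (k - l))"

definition autocorr :: "(int \<Rightarrow> complex) \<Rightarrow> int \<Rightarrow> complex" where
  "autocorr h l = (\<Sum>\<^sub>\<infinity>k. h k * cnj (h (k - l)))"

text \<open>Waterfilling level max(0, theta - N0/|H(w)|^2); at zeros of H the
  term N0/|H|^2 is +infinity, so the level is 0.\<close>
definition waterfill :: "real \<Rightarrow> real \<Rightarrow> (real \<Rightarrow> complex) \<Rightarrow> real \<Rightarrow> real" where
  "waterfill N0 \<theta> H \<omega> =
     (if H \<omega> = 0 then 0 else max 0 (\<theta> - N0 / (cmod (H \<omega>))\<^sup>2))"

definition has_memory :: "(int \<Rightarrow> complex) \<Rightarrow> nat \<Rightarrow> bool" where
  "has_memory v K \<longleftrightarrow> (\<exists>s. v s \<noteq> 0 \<and> v (s + int K) \<noteq> 0 \<and>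
      (\<forall>k. k < s \<or> s + int K < k \<longrightarrow> v k = 0))"

end

theory Submission imports Defs "HOL-Computational_Algebra.Polynomial" begin

lemma has_sum_finsum:
  fixes f :: "'i \<Rightarrow> 'a \<Rightarrow> 'b::topological_comm_monoid_add"
  assumes "finite I" "\<And>i. i \<in> I \<Longrightarrow> (f i has_sum s i) A"
  shows "((\<lambda>x. \<Sum>i\<in>I. f i x) has_sum (\<Sum>i\<in>I. s i)) A"
  using assms
proof (induction I rule: finite_induct)
  case empty then show ?case by simp
next
  case (insert j I)
  then show ?case by (simp add: has_sum_add)
qed

lemma infsum_support:
  fixes f :: "'a \<Rightarrow> 'b::{comm_monoid_add,t2_space}"
  assumes "finite S" "\<And>x. x \<notin> S \<Longrightarrow> f x = 0"
  shows "infsum f UNIV = sum f S"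
proof -
  have "infsum f UNIV = infsum f S"
    by (rule infsum_cong_neutral) (use assms in auto)
  then show ?thesis using assms by simp
qed

definition ee :: "real \<Rightarrow> complex" where "ee \<omega> = exp (- (\<i> * complex_of_real \<omega>))"

lemma exp_int_split:
  "exp (- (\<i> * complex_of_real (real_of_int (s + int k) * \<omega>))) =
     exp (- (\<i> * complex_of_real (real_of_int s * \<omega>))) * ee \<omega> ^ k"
proof -
  have "- (\<i> * complex_of_real (real_of_int (s + int k) * \<omega>)) =
     - (\<i> * complex_of_real (real_of_int s * \<omega>)) + of_nat k * (- (\<i> * complex_of_real \<omega>))"
    by (simp add: algebra_simps)
  moreover have "ee \<omega> ^ k = exp (of_nat k * (- (\<i> * complex_of_real \<omega>)))"
    unfolding ee_def by (rule exp_of_nat_mult[symmetric])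
  ultimately show ?thesis by (simp only: exp_add)
qed

lemma sum_int_shift:
  "(\<Sum>n\<in>{s..s + int N}. g n) = (\<Sum>k\<le>N. g (s + int k))"
proof -
  have "{s..s + int N} = (\<lambda>k. s + int k) ` {..N}"
  proof
    show "{s..s + int N} \<subseteq> (\<lambda>k. s + int k) ` {..N}"
    proof
      fix n assume "n \<in> {s..s + int N}"
      then have "n = s + int (nat (n - s))" "nat (n - s) \<in> {..N}" by auto
      then show "n \<in> (\<lambda>k. s + int k) ` {..N}" by blast
    qed
  qed auto
  moreover have "inj_on (\<lambda>k. s + int k) {..N}" by (auto simp: inj_on_def)
  ultimately show ?thesis by (simp add: sum.reindex)
qed

lemma dtft_finite:
  assumes "\<forall>n. n < s \<or> s + int N < n \<longrightarrow> x n = 0"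
  shows "dtft x \<omega> = exp (- (\<i> * complex_of_real (real_of_int s * \<omega>))) *
           (\<Sum>k\<le>N. x (s + int k) * ee \<omega> ^ k)"
proof -
  have "dtft x \<omega> = (\<Sum>n\<in>{s..s + int N}. x n * exp (- (\<i> * complex_of_real (real_of_int n * \<omega>))))"
    unfolding dtft_def by (rule infsum_support) (use assms in auto)
  also have "\<dots> = (\<Sum>k\<le>N. x (s + int k) * exp (- (\<i> * complex_of_real (real_of_int (s + int k) * \<omega>))))"
    by (rule sum_int_shift)
  also have "\<dots> = exp (- (\<i> * complex_of_real (real_of_int s * \<omega>))) *
           (\<Sum>k\<le>N. x (s + int k) * ee \<omega> ^ k)"
    unfolding exp_int_split sum_distrib_left by (simp add: mult_ac)
  finally show ?thesis .
qed

lemma conv_finite: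
  assumes "\<forall>l. l < 0 \<or> int L < l \<longrightarrow> h l = 0"
  shows "conv h p k = (\<Sum>l\<in>{0..int L}. h l * p (k - l))"
  unfolding conv_def by (rule infsum_support) (use assms in auto)

lemma dtft_conv:
  assumes h: "\<forall>l. l < 0 \<or> int L < l \<longrightarrow> h l = 0"
    and ps: "(\<lambda>n. norm (p n)) summable_on UNIV"
  shows "dtft (conv h p) \<omega> = dtft h \<omega> * dtft p \<omega>"
proof -
  define c where "c n = exp (- (\<i> * complex_of_real (real_of_int n * \<omega>)))" for n :: int
  define f where "f n = p n * c n" for n
  have cmul: "c k = c l * c (k - l)" for k l
  proof -
    have "- (\<i> * complex_of_real (real_of_int k * \<omega>)) =
        - (\<i> * complex_of_real (real_of_int l * \<omega>)) + - (\<i> * complex_of_real (real_of_int (k - l) * \<omega>))"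
      by (simp add: algebra_simps)
    then show ?thesis unfolding c_def by (simp only: exp_add)
  qed
  have nc: "norm (c n) = 1" for n unfolding c_def by (simp add: norm_exp_eq_Re)
  have fs: "f summable_on UNIV"
    by (rule abs_summable_summable) (simp add: f_def norm_mult nc ps)
  have bij: "bij_betw (\<lambda>k. k - l) UNIV UNIV" for l :: int
    by (rule bij_betwI[where g="\<lambda>k. k + l"]) auto
  have fsh: "((\<lambda>k. f (k - l)) has_sum dtft p \<omega>) UNIV" for l
  proof -
    have "(f has_sum dtft p \<omega>) UNIV" using fs unfolding dtft_def f_def c_def
      by (simp add: summable_iff_has_sum_infsum f_def c_def)
    then show ?thesis using has_sum_reindex_bij_betw[OF bij[of l], of f] by simp
  qed
  have "dtft (conv h p) \<omega> = infsum (\<lambda>k. \<Sum>l\<in>{0..int L}. h l * c l * f (k - l)) UNIV"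
    unfolding dtft_def
  proof (rule infsum_cong)
    fix k
    have "conv h p k * exp (- (\<i> * complex_of_real (real_of_int k * \<omega>))) = conv h p k * c k"
      by (simp add: c_def)
    also have "\<dots> = (\<Sum>l\<in>{0..int L}. h l * p (k - l) * (c l * c (k - l)))"
      by (simp add: conv_finite[OF h] sum_distrib_right flip: cmul)
    also have "\<dots> = (\<Sum>l\<in>{0..int L}. h l * c l * f (k - l))"
      by (simp add: f_def mult_ac)
    finally show "conv h p k * exp (- (\<i> * complex_of_real (real_of_int k * \<omega>))) = (\<Sum>l\<in>{0..int L}. h l * c l * f (k - l))" .
  qed
  also have "\<dots> = (\<Sum>l\<in>{0..int L}. h l * c l * dtft p \<omega>)"
    by (rule infsumI, rule has_sum_finsum) (auto intro: has_sum_cmult_right fsh)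
  also have "\<dots> = dtft h \<omega> * dtft p \<omega>"
  proof -
    have "dtft h \<omega> = (\<Sum>l\<in>{0..int L}. h l * c l)"
      unfolding dtft_def c_def by (rule infsum_support) (use h in auto)
    then show ?thesis by (simp add: sum_distrib_right)
  qed
  finally show ?thesis .
qed

definition Pof :: "(nat \<Rightarrow> complex) \<Rightarrow> nat \<Rightarrow> complex poly" where
  "Pof a N = (\<Sum>k\<le>N. monom (a k) k)"

lemma poly_Pof: "poly (Pof a N) z = (\<Sum>k\<le>N. a k * z ^ k)"
  unfolding Pof_def by (simp add: poly_sum poly_monom)

lemma coeff_Pof: "coeff (Pof a N) n = (if n \<le> N then a n else 0)"
  unfolding Pof_def coeff_sum coeff_monom
  by (auto simp: sum.delta' )

lemma degree_Pof: "degree (Pof a N) \<le> N"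
  by (rule degree_le) (simp add: coeff_Pof)

lemma degree_Pof_eq: "a N \<noteq> 0 \<Longrightarrow> degree (Pof a N) = N"
  using degree_Pof[of a N] le_degree[of "Pof a N" N] by (simp add: coeff_Pof)

lemma sq_Pof:
  fixes z :: complex
  assumes z: "z * cnj z = 1"
  shows "z ^ N * ((\<Sum>k\<le>N. a k * z ^ k) * cnj (\<Sum>k\<le>N. a k * z ^ k)) =
         poly (Pof a N * Pof (\<lambda>k. cnj (a (N - k))) N) z"
proof -
  have "z ^ N * cnj (\<Sum>k\<le>N. a k * z ^ k) = (\<Sum>k\<le>N. cnj (a k) * z ^ (N - k))"
  proof -
    have hk: "z ^ N * cnj (a k * z ^ k) = cnj (a k) * z ^ (N - k)" if "k \<in> {..N}" for k
    proof -
      have "z ^ N = z ^ (N - k) * z ^ k" using that by (simp flip: power_add)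
      then have "z ^ N * cnj (a k * z ^ k) = cnj (a k) * z ^ (N - k) * (z * cnj z) ^ k"
        by (simp add: power_mult_distrib mult_ac)
      then show ?thesis using z by simp
    qed
    show ?thesis unfolding cnj_sum sum_distrib_left by (rule sum.cong[OF refl], rule hk)
  qed
  also have "\<dots> = (\<Sum>k\<le>N. cnj (a (N - k)) * z ^ k)"
  proof -
    have "(\<Sum>k\<le>N. cnj (a k) * z ^ (N - k)) = (\<Sum>k=0..N. cnj (a k) * z ^ (N - k))"
      by (simp add: atLeast0AtMost)
    also have "\<dots> = (\<Sum>k=0..N. cnj (a (N + 0 - k)) * z ^ (N - (N + 0 - k)))"
      by (rule sum.atLeastAtMost_rev)
    also have "\<dots> = (\<Sum>k\<le>N. cnj (a (N - k)) * z ^ k)"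
      by (simp add: atLeast0AtMost)
    finally show ?thesis .
  qed
  finally show ?thesis by (simp add: poly_Pof mult_ac)
qed

lemma ee_inj:
  assumes "\<bar>\<alpha> - \<beta>\<bar> < 2 * pi" "ee \<alpha> = ee \<beta>"
  shows "\<alpha> = \<beta>"
proof -
  have "exp (\<i> * complex_of_real (\<beta> - \<alpha>)) = ee \<alpha> / ee \<beta>"
    unfolding ee_def by (simp add: exp_diff[symmetric] algebra_simps)
  also have "\<dots> = 1" using assms(2) unfolding ee_def by simp
  finally obtain n :: int where n: "\<beta> - \<alpha> = of_int (2 * n) * pi"
    by (auto simp: exp_eq_1)
  have "\<bar>of_int (2 * n) * pi\<bar> < 2 * pi" using n assms(1) by simp
  then have "\<bar>real_of_int n\<bar> < 1" by (simp add: abs_mult)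
  then have "n = 0" by linarith
  then show ?thesis using n by simp
qed

lemma poly_zero_arc:
  assumes r: "r > 0" and z: "\<And>\<omega>. \<omega> \<in> ball \<omega>0 r \<Longrightarrow> poly D (ee \<omega>) = 0"
  shows "D = 0"
proof (rule ccontr)
  assume "D \<noteq> 0"
  define r' where "r' = min r 1"
  have r': "r' > 0" "r' \<le> r" "r' \<le> 1" using r by (auto simp: r'_def)
  have sub: "{\<omega>0 - r'<..<\<omega>0 + r'} \<subseteq> ball \<omega>0 r" using r' by (auto simp: dist_real_def)
  have inj: "inj_on ee {\<omega>0 - r'<..<\<omega>0 + r'}"
  proof (rule inj_onI)
    fix a b assume "a \<in> {\<omega>0 - r'<..<\<omega>0 + r'}" "b \<in> {\<omega>0 - r'<..<\<omega>0 + r'}" "ee a = ee b"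
    moreover have "2 < 2 * pi" using pi_gt3 by simp
    ultimately show "a = b" using r' by (intro ee_inj) auto
  qed
  have "ee ` {\<omega>0 - r'<..<\<omega>0 + r'} \<subseteq> {x. poly D x = 0}" using sub z by auto
  then have "finite (ee ` {\<omega>0 - r'<..<\<omega>0 + r'})"
    using poly_roots_finite[OF \<open>D \<noteq> 0\<close>] finite_subset by blast
  then have "finite {\<omega>0 - r'<..<\<omega>0 + r'}" using finite_imageD inj by blast
  then show False using r' infinite_Ioo[of "\<omega>0 - r'" "\<omega>0 + r'"] by simp
qed

lemma norm_ee: "ee \<omega> * cnj (ee \<omega>) = 1"
proof -
  have "norm (ee \<omega>) = 1" unfolding ee_def by (simp add: norm_exp_eq_Re)
  then show ?thesis using complex_norm_square[of "ee \<omega>"] by simp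
qed

theorem theorem2:
  fixes h p :: "int \<Rightarrow> complex" and L K :: nat and N0 \<theta> :: real
  assumes h_taps: "\<forall>l. l < 0 \<or> int L < l \<longrightarrow> h l = 0"
    and h_memory: "autocorr h (int L) \<noteq> 0"
    and N0_pos: "N0 > 0"
    and p_summable: "(\<lambda>n. norm (p n)) summable_on UNIV"
    and waterfilling: "\<forall>\<omega>. (cmod (dtft p \<omega>))\<^sup>2 = waterfill N0 \<theta> (dtft h) \<omega>"
    and power: "integral {-pi..pi} (\<lambda>\<omega>. (cmod (dtft p \<omega>))\<^sup>2) = 2 * pi"
    and v_memory: "has_memory (conv h p) K"
  shows "L \<le> K"
proof -
  define v where "v = conv h p"
  obtain s where vs: "v s \<noteq> 0" "v (s + int K) \<noteq> 0"
    and vz: "\<forall>k. k < s \<or> s + int K < k \<longrightarrow> v k = 0"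
    using v_memory unfolding has_memory_def v_def by blast
  define H where "H = dtft h"
  define P where "P = dtft p"
  define V where "V = dtft v"
  define a where "a k = v (s + int k)" for k :: nat
  define b where "b k = h (int k)" for k :: nat
  define Q where "Q = Pof a K"
  define Es where "Es \<omega> = exp (- (\<i> * complex_of_real (real_of_int s * \<omega>)))" for \<omega>
  have VHP: "V \<omega> = H \<omega> * P \<omega>" for \<omega>
    unfolding V_def H_def P_def v_def by (rule dtft_conv[OF h_taps p_summable])
  have Hf: "H \<omega> = (\<Sum>k\<le>L. b k * ee \<omega> ^ k)" for \<omega>
    using dtft_finite[of 0 L h \<omega>] h_taps unfolding H_def b_def by simp
  have Vf: "V \<omega> = Es \<omega> * poly Q (ee \<omega>)" for \<omega>
    using dtft_finite[of s K v \<omega>] vz unfolding V_def Es_def Q_def poly_Pof a_def by simp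
  have Es0: "Es \<omega> \<noteq> 0" for \<omega> unfolding Es_def by simp
  have Es1: "Es \<omega> * cnj (Es \<omega>) = 1" for \<omega>
  proof -
    have "norm (Es \<omega>) = 1" unfolding Es_def by (simp add: norm_exp_eq_Re)
    then show ?thesis using complex_norm_square[of "Es \<omega>"] by simp
  qed
  have ac: "autocorr h (int L) = h (int L) * cnj (h 0)"
  proof -
    have "autocorr h (int L) = (\<Sum>k\<in>{int L}. h k * cnj (h (k - int L)))"
      unfolding autocorr_def
    proof (rule infsum_support)
      fix k assume "k \<notin> {int L}"
      then have "int L < k \<or> k - int L < 0" by auto
      then show "h k * cnj (h (k - int L)) = 0" using h_taps by auto
    qed simp
    then show ?thesis by simp
  qed
  have hL: "b L \<noteq> 0" and h0: "b 0 \<noteq> 0" using h_memory unfolding ac b_def by auto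
  have Qnz: "Q \<noteq> 0"
  proof
    assume "Q = 0"
    then have "coeff Q 0 = 0" by simp
    then show False using vs unfolding Q_def coeff_Pof a_def by simp
  qed
  show ?thesis
  proof (cases "\<exists>\<omega>0. \<theta> * (cmod (H \<omega>0))\<^sup>2 < N0")
    case True
    then obtain \<omega>0 where w0: "\<theta> * (cmod (H \<omega>0))\<^sup>2 < N0" by blast
    have contH: "continuous_on UNIV H"
      unfolding Hf[abs_def] ee_def by (intro continuous_intros)
    have "open {\<omega>. \<theta> * (cmod (H \<omega>))\<^sup>2 < N0}"
      by (rule open_Collect_less) (intro continuous_intros contH)+
    then obtain r where r: "r > 0" "ball \<omega>0 r \<subseteq> {\<omega>. \<theta> * (cmod (H \<omega>))\<^sup>2 < N0}"
      using w0 unfolding open_contains_ball by blast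
    have "poly Q (ee \<omega>) = 0" if "\<omega> \<in> ball \<omega>0 r" for \<omega>
    proof -
      have lt: "\<theta> * (cmod (H \<omega>))\<^sup>2 < N0" using r that by auto
      have "waterfill N0 \<theta> (dtft h) \<omega> = 0"
      proof (cases "H \<omega> = 0")
        case False
        then have pos: "(cmod (H \<omega>))\<^sup>2 > 0" by simp
        have "\<theta> < N0 / (cmod (H \<omega>))\<^sup>2" using lt pos by (simp add: field_simps)
        then show ?thesis using False unfolding waterfill_def H_def by simp
      qed (simp add: waterfill_def H_def)
      then have "(cmod (P \<omega>))\<^sup>2 = 0" using waterfilling unfolding P_def by simp
      then have "P \<omega> = 0" by simp
      then have "V \<omega> = 0" by (simp add: VHP)
      then show ?thesis using Es0 by (simp add: Vf)
    qed
    then have "Q = 0" using poly_zero_arc[OF r(1)] by blast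
    then show ?thesis using Qnz by simp
  next
    case False
    then have ge: "N0 \<le> \<theta> * (cmod (H \<omega>))\<^sup>2" for \<omega> by (simp add: not_less)
    have Hnz: "H \<omega> \<noteq> 0" for \<omega> using ge[of \<omega>] N0_pos by auto
    have thpos: "\<theta> > 0"
    proof (rule ccontr)
      assume "\<not> \<theta> > 0"
      then have "\<theta> * (cmod (H 0))\<^sup>2 \<le> 0" by (simp add: mult_nonpos_nonneg)
      then show False using ge[of 0] N0_pos by linarith
    qed
    show ?thesis
    proof (rule ccontr)
      assume "\<not> L \<le> K"
      then have KL: "K < L" by simp
      define br where "br k = cnj (b (L - k))" for k
      define ar where "ar k = cnj (a (K - k))" for k
      define PV where "PV = Q * Pof ar K"
      define PH where "PH = Pof b L * Pof br L"
      define D where "D = monom 1 L * PV - monom 1 K * (smult (of_real \<theta>) PH - monom (of_real N0) L)"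
      have "poly D (ee \<omega>) = 0" for \<omega>
      proof -
        define z where "z = ee \<omega>"
        have z1: "z * cnj z = 1" unfolding z_def by (rule norm_ee)
        have real_id: "(cmod (V \<omega>))\<^sup>2 = \<theta> * (cmod (H \<omega>))\<^sup>2 - N0"
        proof -
          have pos: "(cmod (H \<omega>))\<^sup>2 > 0" using Hnz by simp
          have "(cmod (P \<omega>))\<^sup>2 = \<theta> - N0 / (cmod (H \<omega>))\<^sup>2"
          proof -
            have "N0 / (cmod (H \<omega>))\<^sup>2 \<le> \<theta>" using ge[of \<omega>] pos by (simp add: field_simps)
            then show ?thesis using waterfilling Hnz unfolding waterfill_def P_def H_def by simp
          qed
          then show ?thesis using pos by (simp add: VHP norm_mult power_mult_distrib field_simps)
        qed
        have cid: "V \<omega> * cnj (V \<omega>) = of_real \<theta> * (H \<omega> * cnj (H \<omega>)) - of_real N0"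
          using arg_cong[OF real_id, of complex_of_real]
          unfolding of_real_diff of_real_mult complex_norm_square by simp
        have qq: "V \<omega> * cnj (V \<omega>) = poly Q z * cnj (poly Q z)"
        proof -
          have "V \<omega> * cnj (V \<omega>) = (Es \<omega> * cnj (Es \<omega>)) * (poly Q z * cnj (poly Q z))"
            by (simp add: Vf z_def mult_ac)
          then show ?thesis using Es1 by simp
        qed
        have pv: "poly PV z = z ^ K * (V \<omega> * cnj (V \<omega>))"
          unfolding qq PV_def Q_def ar_def poly_Pof[of a K] by (rule sq_Pof[OF z1, symmetric])
        have ph: "poly PH z = z ^ L * (H \<omega> * cnj (H \<omega>))"
          unfolding PH_def br_def Hf[of \<omega>, folded z_def] by (rule sq_Pof[OF z1, symmetric])
        have "poly D z = z ^ L * poly PV z - z ^ K * (of_real \<theta> * poly PH z - of_real N0 * z ^ L)"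
          by (simp add: D_def poly_monom)
        also have "\<dots> = 0" unfolding pv ph cid by (simp add: algebra_simps)
        finally show ?thesis unfolding z_def .
      qed
      then have D0: "D = 0" using poly_zero_arc[of 1 0 D] by simp
      have dPV: "degree PV \<le> 2 * K"
        unfolding PV_def Q_def using degree_mult_le[of "Pof a K" "Pof ar K"] degree_Pof[of a K] degree_Pof[of ar K]
        by linarith
      have c1: "coeff PV (K + L) = 0" using dPV KL by (intro coeff_eq_0) linarith
      have cPH: "coeff PH (2 * L) = b L * cnj (b 0)"
      proof -
        have dbr: "br L \<noteq> 0" using h0 by (simp add: br_def)
        have "coeff PH (degree (Pof b L) + degree (Pof br L)) = coeff (Pof b L) L * coeff (Pof br L) L"
          unfolding PH_def coeff_mult_degree_sum using degree_Pof_eq[of b L, OF hL] degree_Pof_eq[of br L, OF dbr] by simp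
        then show ?thesis using degree_Pof_eq[of b L, OF hL] degree_Pof_eq[of br L, OF dbr] by (simp add: coeff_Pof br_def mult_2)
      qed
      have "coeff D (K + 2 * L) = 0" using D0 by simp
      moreover have "coeff D (K + 2 * L) = coeff PV (K + L) - (of_real \<theta> * coeff PH (2 * L) - (if 2 * L = L then of_real N0 else 0))"
        unfolding D_def by (simp add: coeff_monom_mult coeff_diff coeff_monom mult_2 add_ac)
      ultimately have "of_real \<theta> * (b L * cnj (b 0)) = 0" using c1 cPH KL by simp
      then show False using thpos hL h0 by simp
    qed
  qed
qed

end
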